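(* Let $p:V\to X$ be a smooth map between diffeological spaces, and suppose that each fibre of $p$ has a (real) vector space structure. Then there is a smallest diffeology $\mathcal{D}$ on $V$ which contains the given diffeology on $V$ and which makes $V$ (with $p$ and the given fibrewise vector space structures) into a diffeological vector space over $X$.
   Context: A diffeological space is a set with, for every open subset $U$ of every $\mathbb{R}^n$, a set of maps $U\to X$ called plots, containing constants, closed under precomposition with smooth maps between open subsets of Euclidean spaces, and satisfying the sheaf condition; smooth maps send plots to plots; diffeologies on a set are ordered by inclusion. A diffeological vector space over $X$ is a diffeological space $V$ with a smooth map $p:V\to X$ and a vector space structure on each fibre $p^{-1}(x)$ such that fibrewise addition $V\times_X V\to V$, scalar multiplication $\mathbb{R}\times V\to V$ and the zero section $X\to V$ are smooth, where $\mathbb{R}\times V$ has the product diffeology and $V\times_X V$ the sub-diffeology of $V\times V$. *)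

theory Defs
  imports "HOL-Analysis.Analysis"
begin

text \<open>Euclidean space R^n, modelled as the functions nat => real vanishing from index n on.
  Its topology is the subspace topology of the product topology, i.e. the Euclidean one.\<close>
definition Eucl :: "nat \<Rightarrow> (nat \<Rightarrow> real) set" where
  "Eucl n = {x. \<forall>i\<ge>n. x i = 0}"

definition open_in_Eucl :: "nat \<Rightarrow> (nat \<Rightarrow> real) set \<Rightarrow> bool" where
  "open_in_Eucl n U \<longleftrightarrow> openin (top_of_set (Eucl n)) U"

definition pd :: "nat \<Rightarrow> ((nat \<Rightarrow> real) \<Rightarrow> real) \<Rightarrow> (nat \<Rightarrow> real) \<Rightarrow> real" where
  "pd i f x = deriv (\<lambda>t. f (x(i := x i + t))) 0"

fun Ck :: "nat \<Rightarrow> nat \<Rightarrow> (nat \<Rightarrow> real) set \<Rightarrow> ((nat \<Rightarrow> real) \<Rightarrow> real) \<Rightarrow> bool" where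
  "Ck 0 n U f = continuous_on U f"
| "Ck (Suc k) n U f =
     (continuous_on U f \<and>
      (\<forall>i<n. \<forall>x\<in>U. (\<lambda>t. f (x(i := x i + t))) differentiable (at 0)) \<and>
      (\<forall>i<n. Ck k n U (pd i f)))"

definition smooth_fun :: "nat \<Rightarrow> (nat \<Rightarrow> real) set \<Rightarrow> ((nat \<Rightarrow> real) \<Rightarrow> real) \<Rightarrow> bool" where
  "smooth_fun n U f \<longleftrightarrow> (\<forall>k. Ck k n U f)"

definition smooth_eucl_map ::
  "nat \<Rightarrow> nat \<Rightarrow> (nat \<Rightarrow> real) set \<Rightarrow> (nat \<Rightarrow> real) set \<Rightarrow> ((nat \<Rightarrow> real) \<Rightarrow> (nat \<Rightarrow> real)) \<Rightarrow> bool" where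
  "smooth_eucl_map m n W U g \<longleftrightarrow> g ` W \<subseteq> U \<and> (\<forall>j<n. smooth_fun m W (\<lambda>x. g x j))"

text \<open>A diffeology on a set S: D n U is the set of plots with domain the open set U of R^n
  (only values on U matter).\<close>
type_synonym 'a diffeology = "nat \<Rightarrow> (nat \<Rightarrow> real) set \<Rightarrow> ((nat \<Rightarrow> real) \<Rightarrow> 'a) set"

definition diffeology :: "'a set \<Rightarrow> 'a diffeology \<Rightarrow> bool" where
  "diffeology S D \<longleftrightarrow>
     (\<forall>n U \<phi>. \<phi> \<in> D n U \<longrightarrow> open_in_Eucl n U \<and> \<phi> ` U \<subseteq> S) \<and>
     (\<forall>n U \<phi> \<psi>. \<phi> \<in> D n U \<and> (\<forall>x\<in>U. \<psi> x = \<phi> x) \<longrightarrow> \<psi> \<in> D n U) \<and>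
     (\<forall>n U c. open_in_Eucl n U \<and> c \<in> S \<longrightarrow> (\<lambda>_. c) \<in> D n U) \<and>
     (\<forall>m n W U g \<phi>. open_in_Eucl m W \<and> \<phi> \<in> D n U \<and> smooth_eucl_map m n W U g
        \<longrightarrow> \<phi> \<circ> g \<in> D m W) \<and>
     (\<forall>n U \<phi>. open_in_Eucl n U \<and> \<phi> ` U \<subseteq> S \<and>
        (\<forall>x\<in>U. \<exists>W. open_in_Eucl n W \<and> x \<in> W \<and> W \<subseteq> U \<and> \<phi> \<in> D n W)
        \<longrightarrow> \<phi> \<in> D n U)"

definition diffeology_le :: "'a diffeology \<Rightarrow> 'a diffeology \<Rightarrow> bool" where
  "diffeology_le D D' \<longleftrightarrow> (\<forall>n U. D n U \<subseteq> D' n U)"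

definition smooth_map :: "'a diffeology \<Rightarrow> 'b diffeology \<Rightarrow> ('a \<Rightarrow> 'b) \<Rightarrow> bool" where
  "smooth_map DA DB f \<longleftrightarrow> (\<forall>n U \<phi>. \<phi> \<in> DA n U \<longrightarrow> f \<circ> \<phi> \<in> DB n U)"

definition fibre :: "'v set \<Rightarrow> ('v \<Rightarrow> 'x) \<Rightarrow> 'x \<Rightarrow> 'v set" where
  "fibre V p x = {v \<in> V. p v = x}"

definition vector_space_on ::
  "'v set \<Rightarrow> ('v \<Rightarrow> 'v \<Rightarrow> 'v) \<Rightarrow> (real \<Rightarrow> 'v \<Rightarrow> 'v) \<Rightarrow> 'v \<Rightarrow> bool" where
  "vector_space_on F add smul z \<longleftrightarrow>
     z \<in> F \<and>
     (\<forall>u\<in>F. \<forall>w\<in>F. add u w \<in> F) \<and>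
     (\<forall>a. \<forall>u\<in>F. smul a u \<in> F) \<and>
     (\<forall>u\<in>F. \<forall>v\<in>F. \<forall>w\<in>F. add (add u v) w = add u (add v w)) \<and>
     (\<forall>u\<in>F. \<forall>w\<in>F. add u w = add w u) \<and>
     (\<forall>u\<in>F. add u z = u) \<and>
     (\<forall>u\<in>F. \<exists>w\<in>F. add u w = z) \<and>
     (\<forall>a. \<forall>u\<in>F. \<forall>w\<in>F. smul a (add u w) = add (smul a u) (smul a w)) \<and>
     (\<forall>a b. \<forall>u\<in>F. smul (a + b) u = add (smul a u) (smul b u)) \<and>
     (\<forall>a b. \<forall>u\<in>F. smul a (smul b u) = smul (a * b) u) \<and>
     (\<forall>u\<in>F. smul 1 u = u)"

text \<open>Diffeological vector space over X: p smooth, fibres are vector spaces, and fibrewise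
  addition (on V \<times>_X V with the subset diffeology of the product diffeology), scalar
  multiplication (on R \<times> V, R with its standard diffeology of smooth functions) and the
  zero section are smooth.\<close>
definition diffeological_vector_space ::
  "'x set \<Rightarrow> 'x diffeology \<Rightarrow> 'v set \<Rightarrow> 'v diffeology \<Rightarrow> ('v \<Rightarrow> 'x)
   \<Rightarrow> ('x \<Rightarrow> 'v \<Rightarrow> 'v \<Rightarrow> 'v) \<Rightarrow> ('x \<Rightarrow> real \<Rightarrow> 'v \<Rightarrow> 'v) \<Rightarrow> ('x \<Rightarrow> 'v) \<Rightarrow> bool" where
  "diffeological_vector_space X DX V D p add smul zero \<longleftrightarrow>
     p ` V \<subseteq> X \<and> smooth_map D DX p \<and>
     (\<forall>x\<in>X. vector_space_on (fibre V p x) (add x) (smul x) (zero x)) \<and>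
     (\<forall>n U \<phi> \<psi>. \<phi> \<in> D n U \<and> \<psi> \<in> D n U \<and> (\<forall>r\<in>U. p (\<phi> r) = p (\<psi> r))
        \<longrightarrow> (\<lambda>r. add (p (\<phi> r)) (\<phi> r) (\<psi> r)) \<in> D n U) \<and>
     (\<forall>n U c \<phi>. open_in_Eucl n U \<and> smooth_fun n U c \<and> \<phi> \<in> D n U
        \<longrightarrow> (\<lambda>r. smul (p (\<phi> r)) (c r) (\<phi> r)) \<in> D n U) \<and>
     (\<forall>n U \<psi>. \<psi> \<in> DX n U \<longrightarrow> (\<lambda>r. zero (\<psi> r)) \<in> D n U)"

end

theory Submission imports Defs begin
lemma dopen: "diffeology S D \<Longrightarrow> \<phi> \<in> D n U \<Longrightarrow> open_in_Eucl n U \<and> \<phi> ` U \<subseteq> S"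
  unfolding diffeology_def by (drule conjunct1) blast
lemma dcong: "diffeology S D \<Longrightarrow> \<phi> \<in> D n U \<Longrightarrow> (\<forall>x\<in>U. \<psi> x = \<phi> x) \<Longrightarrow> \<psi> \<in> D n U"
  unfolding diffeology_def by (drule conjunct2, drule conjunct1) blast
lemma dconst: "diffeology S D \<Longrightarrow> open_in_Eucl n U \<Longrightarrow> c \<in> S \<Longrightarrow> (\<lambda>_. c) \<in> D n U"
  unfolding diffeology_def by (drule conjunct2, drule conjunct2, drule conjunct1) blast
lemma dcomp: "diffeology S D \<Longrightarrow> open_in_Eucl m W \<Longrightarrow> \<phi> \<in> D n U \<Longrightarrow> smooth_eucl_map m n W U g
        \<Longrightarrow> \<phi> \<circ> g \<in> D m W"
  unfolding diffeology_def by (drule conjunct2, drule conjunct2, drule conjunct2, drule conjunct1) blast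
lemma dsheaf: "diffeology S D \<Longrightarrow> open_in_Eucl n U \<Longrightarrow> \<phi> ` U \<subseteq> S \<Longrightarrow>
        (\<forall>x\<in>U. \<exists>W. open_in_Eucl n W \<and> x \<in> W \<and> W \<subseteq> U \<and> \<phi> \<in> D n W)
        \<Longrightarrow> \<phi> \<in> D n U"
  unfolding diffeology_def by (drule conjunct2, drule conjunct2, drule conjunct2, drule conjunct2) blast
lemma diffeologyI:
  assumes "\<And>n U \<phi>. \<phi> \<in> D n U \<Longrightarrow> open_in_Eucl n U \<and> \<phi> ` U \<subseteq> S"
   "\<And>n U \<phi> \<psi>. \<phi> \<in> D n U \<Longrightarrow> (\<forall>x\<in>U. \<psi> x = \<phi> x) \<Longrightarrow> \<psi> \<in> D n U"
   "\<And>n U c. open_in_Eucl n U \<Longrightarrow> c \<in> S \<Longrightarrow> (\<lambda>_. c) \<in> D n U"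
   "\<And>m n W U g \<phi>. open_in_Eucl m W \<Longrightarrow> \<phi> \<in> D n U \<Longrightarrow> smooth_eucl_map m n W U g
        \<Longrightarrow> \<phi> \<circ> g \<in> D m W"
   "\<And>n U \<phi>. open_in_Eucl n U \<Longrightarrow> \<phi> ` U \<subseteq> S \<Longrightarrow>
        (\<forall>x\<in>U. \<exists>W. open_in_Eucl n W \<and> x \<in> W \<and> W \<subseteq> U \<and> \<phi> \<in> D n W)
        \<Longrightarrow> \<phi> \<in> D n U"
  shows "diffeology S D"
  unfolding diffeology_def using assms by meson
lemma dvsI:
  assumes "p ` V \<subseteq> X" "smooth_map D DX p"
    "\<forall>x\<in>X. vector_space_on (fibre V p x) (add x) (smul x) (zero x)"
    "\<And>n U \<phi> \<psi>. \<phi> \<in> D n U \<Longrightarrow> \<psi> \<in> D n U \<Longrightarrow> (\<forall>r\<in>U. p (\<phi> r) = p (\<psi> r))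
        \<Longrightarrow> (\<lambda>r. add (p (\<phi> r)) (\<phi> r) (\<psi> r)) \<in> D n U"
    "\<And>n U c \<phi>. open_in_Eucl n U \<Longrightarrow> smooth_fun n U c \<Longrightarrow> \<phi> \<in> D n U
        \<Longrightarrow> (\<lambda>r. smul (p (\<phi> r)) (c r) (\<phi> r)) \<in> D n U"
    "\<And>n U \<psi>. \<psi> \<in> DX n U \<Longrightarrow> (\<lambda>r. zero (\<psi> r)) \<in> D n U"
  shows "diffeological_vector_space X DX V D p add smul zero"
  unfolding diffeological_vector_space_def using assms by meson
lemma dvs_smooth: "diffeological_vector_space X DX V D p add smul zero \<Longrightarrow> smooth_map D DX p"
  unfolding diffeological_vector_space_def by blast
lemma dvs_add: "diffeological_vector_space X DX V D p add smul zero \<Longrightarrow> \<phi> \<in> D n U \<Longrightarrow> \<psi> \<in> D n U \<Longrightarrow> (\<forall>r\<in>U. p (\<phi> r) = p (\<psi> r))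
        \<Longrightarrow> (\<lambda>r. add (p (\<phi> r)) (\<phi> r) (\<psi> r)) \<in> D n U"
  unfolding diffeological_vector_space_def by (drule conjunct2, drule conjunct2, drule conjunct2, drule conjunct1) blast
lemma dvs_smul: "diffeological_vector_space X DX V D p add smul zero \<Longrightarrow> open_in_Eucl n U \<Longrightarrow> smooth_fun n U c \<Longrightarrow> \<phi> \<in> D n U
        \<Longrightarrow> (\<lambda>r. smul (p (\<phi> r)) (c r) (\<phi> r)) \<in> D n U"
  unfolding diffeological_vector_space_def by (drule conjunct2, drule conjunct2, drule conjunct2, drule conjunct2, drule conjunct1) blast
lemma dvs_zero: "diffeological_vector_space X DX V D p add smul zero \<Longrightarrow> \<psi> \<in> DX n U \<Longrightarrow> (\<lambda>r. zero (\<psi> r)) \<in> D n U"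
  unfolding diffeological_vector_space_def by (drule conjunct2, drule conjunct2, drule conjunct2, drule conjunct2, drule conjunct2) blast

lemma pullback_ok:
  assumes dX: "diffeology X DX" and dV: "diffeology V DV"
    and pV: "p ` V \<subseteq> X" and sm: "smooth_map DV DX p"
    and vs: "\<forall>x\<in>X. vector_space_on (fibre V p x) (add x) (smul x) (zero x)"
  defines "D0 \<equiv> (\<lambda>n U. {\<phi>. open_in_Eucl n U \<and> \<phi> ` U \<subseteq> V \<and> p \<circ> \<phi> \<in> DX n U})"
  shows "diffeology V D0 \<and> diffeology_le DV D0
           \<and> diffeological_vector_space X DX V D0 p add smul zero"
proof -
  have fib: "\<And>v. v \<in> V \<Longrightarrow> vector_space_on (fibre V p (p v)) (add (p v)) (smul (p v)) (zero (p v))"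
    using vs pV by blast
  have addV: "\<And>u w. u \<in> V \<Longrightarrow> w \<in> V \<Longrightarrow> p w = p u \<Longrightarrow> add (p u) u w \<in> V \<and> p (add (p u) u w) = p u"
  proof -
    fix u w assume "u \<in> V" "w \<in> V" "p w = p u"
    then have "add (p u) u w \<in> fibre V p (p u)" using fib[of u] unfolding vector_space_on_def fibre_def by auto
    then show "add (p u) u w \<in> V \<and> p (add (p u) u w) = p u" unfolding fibre_def by auto
  qed
  have smulV: "\<And>u a. u \<in> V \<Longrightarrow> smul (p u) a u \<in> V \<and> p (smul (p u) a u) = p u"
  proof -
    fix u a assume "u \<in> V"
    then have "smul (p u) a u \<in> fibre V p (p u)" using fib[of u] unfolding vector_space_on_def fibre_def by auto
    then show "smul (p u) a u \<in> V \<and> p (smul (p u) a u) = p u" unfolding fibre_def by auto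
  qed
  have zeroV: "\<And>x. x \<in> X \<Longrightarrow> zero x \<in> V \<and> p (zero x) = x"
  proof -
    fix x assume "x \<in> X"
    then have "zero x \<in> fibre V p x" using vs unfolding vector_space_on_def by blast
    then show "zero x \<in> V \<and> p (zero x) = x" unfolding fibre_def by auto
  qed
  have d: "diffeology V D0"
  proof (rule diffeologyI)
    fix n U \<phi> assume "\<phi> \<in> D0 n U" then show "open_in_Eucl n U \<and> \<phi> ` U \<subseteq> V" unfolding D0_def by auto
  next
    fix n U \<phi> \<psi> assume a: "\<phi> \<in> D0 n U" "\<forall>x\<in>U. \<psi> x = \<phi> x"
    have "p \<circ> \<psi> \<in> DX n U" apply (rule dcong[OF dX, of "p \<circ> \<phi>"]) using a unfolding D0_def by auto
    then show "\<psi> \<in> D0 n U" using a unfolding D0_def by auto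
  next
    fix n U c assume a: "open_in_Eucl n U" "c \<in> V"
    have "(\<lambda>_. p c) \<in> DX n U" using dconst[OF dX a(1)] a pV by auto
    then show "(\<lambda>_. c) \<in> D0 n U" unfolding D0_def using a by (auto simp: comp_def)
  next
    fix m n W U g \<phi> assume a: "open_in_Eucl m W" "\<phi> \<in> D0 n U" "smooth_eucl_map m n W U g"
    have "(p \<circ> \<phi>) \<circ> g \<in> DX m W" apply (rule dcomp[OF dX a(1) _ a(3)]) using a unfolding D0_def by auto
    moreover have "(\<phi> \<circ> g) ` W \<subseteq> V" using a unfolding D0_def smooth_eucl_map_def by auto
    ultimately show "\<phi> \<circ> g \<in> D0 m W" using a unfolding D0_def by (auto simp: comp_assoc)
  next
    fix n U \<phi> assume a: "open_in_Eucl n U" "\<phi> ` U \<subseteq> V"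
        "\<forall>x\<in>U. \<exists>W. open_in_Eucl n W \<and> x \<in> W \<and> W \<subseteq> U \<and> \<phi> \<in> D0 n W"
    have "p \<circ> \<phi> \<in> DX n U"
    proof (rule dsheaf[OF dX a(1)])
      show "(p \<circ> \<phi>) ` U \<subseteq> X" using a(2) pV by auto
      show "\<forall>x\<in>U. \<exists>W. open_in_Eucl n W \<and> x \<in> W \<and> W \<subseteq> U \<and> p \<circ> \<phi> \<in> DX n W"
        using a(3) unfolding D0_def by auto
    qed
    then show "\<phi> \<in> D0 n U" using a unfolding D0_def by auto
  qed
  have le: "diffeology_le DV D0"
    unfolding diffeology_le_def D0_def using dopen[OF dV] sm unfolding smooth_map_def by blast
  have v: "diffeological_vector_space X DX V D0 p add smul zero"
  proof (rule dvsI)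
    show "p ` V \<subseteq> X" by fact
    show "smooth_map D0 DX p" unfolding smooth_map_def D0_def by auto
    show "\<forall>x\<in>X. vector_space_on (fibre V p x) (add x) (smul x) (zero x)" by fact
  next
    fix n U \<phi> \<psi> assume a: "\<phi> \<in> D0 n U" "\<psi> \<in> D0 n U" "\<forall>r\<in>U. p (\<phi> r) = p (\<psi> r)"
    have im: "\<forall>r\<in>U. add (p (\<phi> r)) (\<phi> r) (\<psi> r) \<in> V \<and> p (add (p (\<phi> r)) (\<phi> r) (\<psi> r)) = p (\<phi> r)"
    proof
      fix r assume r: "r \<in> U"
      then have "\<phi> r \<in> V" "\<psi> r \<in> V" using a unfolding D0_def by auto
      then show "add (p (\<phi> r)) (\<phi> r) (\<psi> r) \<in> V \<and> p (add (p (\<phi> r)) (\<phi> r) (\<psi> r)) = p (\<phi> r)"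
        using addV[of "\<phi> r" "\<psi> r"] a(3) r by simp
    qed
    have "p \<circ> (\<lambda>r. add (p (\<phi> r)) (\<phi> r) (\<psi> r)) \<in> DX n U"
      apply (rule dcong[OF dX, of "p \<circ> \<phi>"]) using a im unfolding D0_def by auto
    then show "(\<lambda>r. add (p (\<phi> r)) (\<phi> r) (\<psi> r)) \<in> D0 n U" using a im unfolding D0_def by auto
  next
    fix n U c \<phi> assume a: "open_in_Eucl n U" "smooth_fun n U c" "\<phi> \<in> D0 n U"
    have im: "\<forall>r\<in>U. smul (p (\<phi> r)) (c r) (\<phi> r) \<in> V \<and> p (smul (p (\<phi> r)) (c r) (\<phi> r)) = p (\<phi> r)"
    proof
      fix r assume r: "r \<in> U"
      then have "\<phi> r \<in> V" using a unfolding D0_def by auto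
      then show "smul (p (\<phi> r)) (c r) (\<phi> r) \<in> V \<and> p (smul (p (\<phi> r)) (c r) (\<phi> r)) = p (\<phi> r)"
        using smulV by auto
    qed
    have "p \<circ> (\<lambda>r. smul (p (\<phi> r)) (c r) (\<phi> r)) \<in> DX n U"
      apply (rule dcong[OF dX, of "p \<circ> \<phi>"]) using a im unfolding D0_def by auto
    then show "(\<lambda>r. smul (p (\<phi> r)) (c r) (\<phi> r)) \<in> D0 n U" using a im unfolding D0_def by auto
  next
    fix n U \<psi> assume a: "\<psi> \<in> DX n U"
    have o: "open_in_Eucl n U \<and> \<psi> ` U \<subseteq> X" using dopen[OF dX a] .
    have "p \<circ> (\<lambda>r. zero (\<psi> r)) \<in> DX n U"
      apply (rule dcong[OF dX a]) using o zeroV by auto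
    then show "(\<lambda>r. zero (\<psi> r)) \<in> D0 n U" using o zeroV unfolding D0_def by auto
  qed
  show ?thesis using d le v by blast
qed

theorem proposition4p6:
  fixes X :: "'x set" and DX :: "'x diffeology"
    and V :: "'v set" and DV :: "'v diffeology"
    and p :: "'v \<Rightarrow> 'x"
    and add :: "'x \<Rightarrow> 'v \<Rightarrow> 'v \<Rightarrow> 'v" and smul :: "'x \<Rightarrow> real \<Rightarrow> 'v \<Rightarrow> 'v"
    and zero :: "'x \<Rightarrow> 'v"
  assumes "diffeology X DX" and "diffeology V DV"
    and "p ` V \<subseteq> X" and "smooth_map DV DX p"
    and "\<forall>x\<in>X. vector_space_on (fibre V p x) (add x) (smul x) (zero x)"
  shows "\<exists>D. diffeology V D \<and> diffeology_le DV D
           \<and> diffeological_vector_space X DX V D p add smul zero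
           \<and> (\<forall>D'. diffeology V D' \<and> diffeology_le DV D'
                  \<and> diffeological_vector_space X DX V D' p add smul zero
                  \<longrightarrow> diffeology_le D D')"
proof -
  define P where "P = (\<lambda>D'. diffeology V D' \<and> diffeology_le DV D'
                  \<and> diffeological_vector_space X DX V D' p add smul zero)"
  obtain D0 where P0: "P D0" using pullback_ok[OF assms] unfolding P_def by blast
  define D where "D = (\<lambda>n U. {\<phi>. \<forall>D'. P D' \<longrightarrow> \<phi> \<in> D' n U})"
  have memD: "\<And>\<phi> n U. \<phi> \<in> D n U \<longleftrightarrow> (\<forall>D'. P D' \<longrightarrow> \<phi> \<in> D' n U)" unfolding D_def by simp
  have sub0: "\<And>\<phi> n U. \<phi> \<in> D n U \<Longrightarrow> \<phi> \<in> D0 n U" using P0 memD by blast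
  have d0: "diffeology V D0" using P0 unfolding P_def by simp
  have Pd: "\<And>D'. P D' \<Longrightarrow> diffeology V D'" unfolding P_def by simp
  have Pv: "\<And>D'. P D' \<Longrightarrow> diffeological_vector_space X DX V D' p add smul zero" unfolding P_def by simp
  have dD: "diffeology V D"
  proof (rule diffeologyI)
    fix n U \<phi> assume "\<phi> \<in> D n U" then show "open_in_Eucl n U \<and> \<phi> ` U \<subseteq> V"
      using sub0 dopen[OF d0] by blast
  next
    fix n U \<phi> \<psi> assume a: "\<phi> \<in> D n U" "\<forall>x\<in>U. \<psi> x = \<phi> x"
    show "\<psi> \<in> D n U" unfolding memD
    proof (intro allI impI)
      fix D' assume "P D'" then show "\<psi> \<in> D' n U" using a memD dcong[OF Pd] by blast
    qed
  next
    fix n U c assume a: "open_in_Eucl n U" "c \<in> V"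
    show "(\<lambda>_. c) \<in> D n U" unfolding memD
      using a dconst[OF Pd] by blast
  next
    fix m n W U g \<phi> assume a: "open_in_Eucl m W" "\<phi> \<in> D n U" "smooth_eucl_map m n W U g"
    show "\<phi> \<circ> g \<in> D m W" unfolding memD
    proof (intro allI impI)
      fix D' assume "P D'" then show "\<phi> \<circ> g \<in> D' m W" using a memD dcomp[OF Pd] by blast
    qed
  next
    fix n U \<phi> assume a: "open_in_Eucl n U" "\<phi> ` U \<subseteq> V"
        "\<forall>x\<in>U. \<exists>W. open_in_Eucl n W \<and> x \<in> W \<and> W \<subseteq> U \<and> \<phi> \<in> D n W"
    show "\<phi> \<in> D n U" unfolding memD
    proof (intro allI impI)
      fix D' assume PD': "P D'"
      have "\<forall>x\<in>U. \<exists>W. open_in_Eucl n W \<and> x \<in> W \<and> W \<subseteq> U \<and> \<phi> \<in> D' n W"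
        using a(3) PD' memD by blast
      then show "\<phi> \<in> D' n U" using dsheaf[OF Pd[OF PD'] a(1,2)] by blast
    qed
  qed
  have le: "diffeology_le DV D"
    unfolding diffeology_le_def using memD unfolding P_def diffeology_le_def by blast
  have v: "diffeological_vector_space X DX V D p add smul zero"
  proof (rule dvsI)
    show "p ` V \<subseteq> X" by fact
    show "smooth_map D DX p" unfolding smooth_map_def
      using sub0 dvs_smooth[OF Pv[OF P0]] unfolding smooth_map_def by blast
    show "\<forall>x\<in>X. vector_space_on (fibre V p x) (add x) (smul x) (zero x)" by fact
  next
    fix n U \<phi> \<psi> assume a: "\<phi> \<in> D n U" "\<psi> \<in> D n U" "\<forall>r\<in>U. p (\<phi> r) = p (\<psi> r)"
    show "(\<lambda>r. add (p (\<phi> r)) (\<phi> r) (\<psi> r)) \<in> D n U" unfolding memD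
    proof (intro allI impI)
      fix D' assume PD': "P D'"
      then have "\<phi> \<in> D' n U" "\<psi> \<in> D' n U" using a memD by auto
      then show "(\<lambda>r. add (p (\<phi> r)) (\<phi> r) (\<psi> r)) \<in> D' n U"
        using dvs_add[OF Pv[OF PD']] a(3) by blast
    qed
  next
    fix n U c \<phi> assume a: "open_in_Eucl n U" "smooth_fun n U c" "\<phi> \<in> D n U"
    show "(\<lambda>r. smul (p (\<phi> r)) (c r) (\<phi> r)) \<in> D n U" unfolding memD
    proof (intro allI impI)
      fix D' assume PD': "P D'"
      then have "\<phi> \<in> D' n U" using a memD by auto
      then show "(\<lambda>r. smul (p (\<phi> r)) (c r) (\<phi> r)) \<in> D' n U"
        using dvs_smul[OF Pv[OF PD'] a(1,2)] by blast
    qed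
  next
    fix n U \<psi> assume a: "\<psi> \<in> DX n U"
    show "(\<lambda>r. zero (\<psi> r)) \<in> D n U" unfolding memD
      using dvs_zero[OF Pv a] by blast
  qed
  have "\<forall>D'. P D' \<longrightarrow> diffeology_le D D'"
    unfolding diffeology_le_def using memD by blast
  then show ?thesis using dD le v unfolding P_def by blast
qed

end
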